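(* Let $\mathbf{w},\mathbf{v}\in\mathbb{R}^d$ be nonzero with $\theta_{\mathbf{w},\mathbf{v}}\in(0,\pi)$, and let \[ h_1(\mathbf{w},\mathbf{v})=\frac{\sin(\theta_{\mathbf{w},\mathbf{v}})\|\mathbf{v}\|}{2\pi\|\mathbf{w}\|}\left(I-\bar{\mathbf{w}}\bar{\mathbf{w}}^\top+\bar{\mathbf{n}}_{\mathbf{v},\mathbf{w}}\bar{\mathbf{n}}_{\mathbf{v},\mathbf{w}}^\top\right),\qquad h_2(\mathbf{w},\mathbf{v})=\frac{1}{2\pi}\left((\pi-\theta_{\mathbf{w},\mathbf{v}})I+\bar{\mathbf{n}}_{\mathbf{w},\mathbf{v}}\bar{\mathbf{v}}^\top+\bar{\mathbf{n}}_{\mathbf{v},\mathbf{w}}\bar{\mathbf{w}}^\top\right). \] Then $\|h_1(\mathbf{w},\mathbf{v})\|_{\mathrm{sp}}=\frac{\sin(\theta_{\mathbf{w},\mathbf{v}})\|\mathbf{v}\|}{\pi\|\mathbf{w}\|}$ and $\|h_2(\mathbf{w},\mathbf{v})\|_{\mathrm{sp}}=\frac{1}{2\pi}\left(\pi-\theta_{\mathbf{w},\mathbf{v}}+\sin(\theta_{\mathbf{w},\mathbf{v}})\right)$.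
   Context: Norms on vectors are Euclidean; $\|\cdot\|_{\mathrm{sp}}$ is the spectral norm. $\bar{\mathbf{w}}=\mathbf{w}/\|\mathbf{w}\|$; $\theta_{\mathbf{w},\mathbf{v}}=\arccos\left(\frac{\mathbf{w}^\top\mathbf{v}}{\|\mathbf{w}\|\|\mathbf{v}\|}\right)$; $\mathbf{n}_{\mathbf{v},\mathbf{w}}=\bar{\mathbf{v}}-\cos(\theta_{\mathbf{v},\mathbf{w}})\bar{\mathbf{w}}$ and $\bar{\mathbf{n}}_{\mathbf{v},\mathbf{w}}=\mathbf{n}_{\mathbf{v},\mathbf{w}}/\|\mathbf{n}_{\mathbf{v},\mathbf{w}}\|$ (similarly $\bar{\mathbf{n}}_{\mathbf{w},\mathbf{v}}$ with roles swapped). *)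

theory Defs
  imports "HOL-Analysis.Analysis"
begin

definition vec_angle :: "real^'n \<Rightarrow> real^'n \<Rightarrow> real" where
  "vec_angle w v = arccos ((w \<bullet> v) / (norm w * norm v))"

definition unitv :: "real^'n \<Rightarrow> real^'n" where
  "unitv w = (1 / norm w) *\<^sub>R w"

definition nvec :: "real^'n \<Rightarrow> real^'n \<Rightarrow> real^'n" where
  "nvec v w = unitv v - cos (vec_angle v w) *\<^sub>R unitv w"

definition nbar :: "real^'n \<Rightarrow> real^'n \<Rightarrow> real^'n" where
  "nbar v w = unitv (nvec v w)"

definition outer :: "real^'n \<Rightarrow> real^'n \<Rightarrow> real^'n^'n" where
  "outer u v = (\<chi> i j. u $ i * v $ j)"

definition spnorm :: "real^'n^'m \<Rightarrow> real" where
  "spnorm A = onorm (\<lambda>x. A *v x)"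

definition h1 :: "real^'n \<Rightarrow> real^'n \<Rightarrow> real^'n^'n" where
  "h1 w v = (sin (vec_angle w v) * norm v / (2 * pi * norm w)) *\<^sub>R
      (mat 1 - outer (unitv w) (unitv w) + outer (nbar v w) (nbar v w))"

definition h2 :: "real^'n \<Rightarrow> real^'n \<Rightarrow> real^'n^'n" where
  "h2 w v = (1 / (2 * pi)) *\<^sub>R
      ((pi - vec_angle w v) *\<^sub>R mat 1 + outer (nbar w v) (unitv v) + outer (nbar v w) (unitv w))"

end

theory Submission
  imports Defs
begin

lemma outer_mv: "outer a b *v x = (b \<bullet> x) *\<^sub>R a"
  by (simp add: vec_eq_iff outer_def matrix_vector_mult_def inner_vec_def
      sum_distrib_left mult_ac)

lemma onorm_eqI:
  fixes A :: "real^'n^'n"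
  assumes "\<And>x. norm (A *v x) \<le> K * norm x" and "x0 \<noteq> 0"
    and "norm (A *v x0) = K * norm x0"
  shows "spnorm A = K"
proof -
  have "onorm (\<lambda>x. A *v x) \<le> K" by (rule onorm_le) (rule assms(1))
  moreover have "K * norm x0 \<le> onorm (\<lambda>x. A *v x) * norm x0"
    using onorm[OF matrix_vector_mul_bounded_linear[of A], of x0] assms(3) by simp
  then have "K \<le> onorm (\<lambda>x. A *v x)" using assms(2) by simp
  ultimately show ?thesis unfolding spnorm_def by simp
qed

lemma bessel2:
  fixes e1 e2 x :: "'a::real_inner"
  assumes "norm e1 = 1" "norm e2 = 1" "e1 \<bullet> e2 = 0"
  shows "(e1 \<bullet> x)^2 + (e2 \<bullet> x)^2 \<le> (norm x)^2"
proof -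
  have i1: "e1 \<bullet> e1 = 1" "e2 \<bullet> e2 = 1" using assms by (simp_all add: norm_eq_1)
  have "0 \<le> (norm (x - (e1 \<bullet> x) *\<^sub>R e1 - (e2 \<bullet> x) *\<^sub>R e2))^2" by simp
  also have "\<dots> = (norm x)^2 - (e1 \<bullet> x)^2 - (e2 \<bullet> x)^2"
    unfolding power2_norm_eq_inner using i1 assms(3)
    by (simp add: inner_diff_left inner_diff_right inner_commute power2_eq_square algebra_simps)
  finally show ?thesis by simp
qed

lemma boundC:
  fixes e1 e2 x :: "'a::real_inner"
  assumes "norm e1 = 1" "norm e2 = 1" "e1 \<bullet> e2 = 0"
  shows "norm (x - (e1 \<bullet> x) *\<^sub>R e1 + (e2 \<bullet> x) *\<^sub>R e2) \<le> 2 * norm x"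
proof -
  have i1: "e1 \<bullet> e1 = 1" "e2 \<bullet> e2 = 1" using assms by (simp_all add: norm_eq_1)
  have "(norm (x - (e1 \<bullet> x) *\<^sub>R e1 + (e2 \<bullet> x) *\<^sub>R e2))^2
      = (norm x)^2 - (e1 \<bullet> x)^2 + 3 * (e2 \<bullet> x)^2"
    unfolding power2_norm_eq_inner using i1 assms(3)
    by (simp add: inner_diff_left inner_diff_right inner_add_left inner_add_right
        inner_commute power2_eq_square algebra_simps)
  also have "\<dots> \<le> (2 * norm x)^2"
  proof -
    have "0 \<le> (e1 \<bullet> x)^2" by simp
    moreover have "(2 * norm x)^2 = 4 * (norm x)^2" by (simp add: power_mult_distrib)
    ultimately show ?thesis using bessel2[OF assms, of x] by linarith
  qed
  finally show ?thesis by (rule power2_le_imp_le) simp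
qed

lemma boundB:
  fixes e1 e2 x :: "'a::real_inner"
  assumes "norm e1 = 1" "norm e2 = 1" "e1 \<bullet> e2 = 0" "c^2 + s^2 = 1" "0 \<le> s"
  shows "norm (((c *\<^sub>R e1 + s *\<^sub>R e2) \<bullet> x) *\<^sub>R (s *\<^sub>R e1 - c *\<^sub>R e2) + (e1 \<bullet> x) *\<^sub>R e2)
     \<le> s * norm x"
proof -
  have i1: "e1 \<bullet> e1 = 1" "e2 \<bullet> e2 = 1" using assms by (simp_all add: norm_eq_1)
  have "(norm (((c *\<^sub>R e1 + s *\<^sub>R e2) \<bullet> x) *\<^sub>R (s *\<^sub>R e1 - c *\<^sub>R e2) + (e1 \<bullet> x) *\<^sub>R e2))^2
      = s^2 * ((e1 \<bullet> x)^2 + (e2 \<bullet> x)^2)"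
  proof -
    have "(norm (((c *\<^sub>R e1 + s *\<^sub>R e2) \<bullet> x) *\<^sub>R (s *\<^sub>R e1 - c *\<^sub>R e2) + (e1 \<bullet> x) *\<^sub>R e2))^2
      = (c*(e1 \<bullet> x) + s*(e2 \<bullet> x))^2 * (s^2+c^2) + (e1 \<bullet> x)^2
        - 2 * c * (c*(e1 \<bullet> x) + s*(e2 \<bullet> x)) * (e1 \<bullet> x)"
      unfolding power2_norm_eq_inner using i1 assms(3)
      by (simp add: inner_diff_left inner_diff_right inner_add_left inner_add_right
        inner_commute power2_eq_square algebra_simps)
    also have "\<dots> = s^2 * ((e1 \<bullet> x)^2 + (e2 \<bullet> x)^2)"
      using assms(4) by algebra
    finally show ?thesis .
  qed
  also have "\<dots> \<le> s^2 * (norm x)^2"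
    using bessel2[OF assms(1-3), of x] by (simp add: mult_left_mono)
  also have "\<dots> = (s * norm x)^2" by (simp add: power_mult_distrib)
  finally show ?thesis by (rule power2_le_imp_le) (use assms in simp)
qed


theorem lemma9:
  fixes w v :: "real^'n"
  assumes "w \<noteq> 0" and "v \<noteq> 0"
    and "0 < vec_angle w v" and "vec_angle w v < pi"
  shows "spnorm (h1 w v) = sin (vec_angle w v) * norm v / (pi * norm w) \<and>
         spnorm (h2 w v) = (pi - vec_angle w v + sin (vec_angle w v)) / (2 * pi)"
proof -
  define W where "W = unitv w"
  define V where "V = unitv v"
  define t where "t = vec_angle w v"
  define c where "c = cos t"
  define s where "s = sin t"
  have nW: "norm W = 1" using assms(1) by (simp add: W_def unitv_def)
  have nV: "norm V = 1" using assms(2) by (simp add: V_def unitv_def)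
  have WW: "W \<bullet> W = 1" and VV: "V \<bullet> V = 1" using nW nV by (simp_all add: norm_eq_1)
  have WVdef: "W \<bullet> V = (w \<bullet> v) / (norm w * norm v)"
    by (simp add: W_def V_def unitv_def)
  have "\<bar>W \<bullet> V\<bar> \<le> 1" using Cauchy_Schwarz_ineq2[of W V] nW nV by simp
  then have c: "c = W \<bullet> V" unfolding c_def t_def vec_angle_def WVdef[symmetric]
    by (simp add: cos_arccos_abs)
  have tvw: "vec_angle v w = t" unfolding t_def vec_angle_def
    by (simp add: inner_commute mult.commute)
  have s0: "0 < s" unfolding s_def t_def using assms(3,4) by (simp add: sin_gt_zero)
  have cs: "c^2 + s^2 = 1" unfolding c_def s_def by simp
  have "0 < s^2" using s0 by simp
  then have "c^2 < 1" using cs by linarith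
  then have "\<bar>c\<bar> < 1" by (simp add: abs_square_less_1)
  then have csm: "-1 < c" by simp
  have nvw: "nvec v w = V - c *\<^sub>R W" by (simp add: nvec_def tvw V_def W_def c_def)
  have "(norm (V - c *\<^sub>R W))^2 = s^2"
    unfolding power2_norm_eq_inner using WW VV c cs
    by (simp add: inner_diff_left inner_diff_right inner_commute power2_eq_square algebra_simps)
  then have nn1: "norm (V - c *\<^sub>R W) = s" using s0 by (simp add: power2_eq_iff_nonneg)
  define U where "U = (1/s) *\<^sub>R (V - c *\<^sub>R W)"
  have Ueq: "nbar v w = U" by (simp add: nbar_def nvw unitv_def nn1 U_def)
  have nU: "norm U = 1" using s0 nn1 by (simp add: U_def)
  have WU: "W \<bullet> U = 0" using WW c by (simp add: U_def inner_diff_right inner_commute)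
  have Vd: "V = c *\<^sub>R W + s *\<^sub>R U" using s0 by (simp add: U_def)
  have nwv: "nvec w v = W - c *\<^sub>R V" by (simp add: nvec_def W_def V_def c_def t_def)
  have "(norm (W - c *\<^sub>R V))^2 = s^2"
    unfolding power2_norm_eq_inner using WW VV c cs
    by (simp add: inner_diff_left inner_diff_right inner_commute power2_eq_square algebra_simps)
  then have nn2: "norm (W - c *\<^sub>R V) = s" using s0 by (simp add: power2_eq_iff_nonneg)
  define P where "P = (1/s) *\<^sub>R (W - c *\<^sub>R V)"
  have Peq: "nbar w v = P" by (simp add: nbar_def nwv unitv_def nn2 P_def)
  have "s *\<^sub>R P = s *\<^sub>R (s *\<^sub>R W - c *\<^sub>R U)"
  proof -
    have "s *\<^sub>R P = W - c *\<^sub>R V" using s0 by (simp add: P_def)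
    also have "\<dots> = (c^2 + s^2) *\<^sub>R W - c *\<^sub>R (c *\<^sub>R W + s *\<^sub>R U)"
      using Vd cs by simp
    also have "\<dots> = s *\<^sub>R (s *\<^sub>R W - c *\<^sub>R U)"
      by (simp add: algebra_simps power2_eq_square)
    finally show ?thesis .
  qed
  then have Pd: "P = s *\<^sub>R W - c *\<^sub>R U" using s0 by simp
  define k where "k = s * norm v / (2 * pi * norm w)"
  have k0: "0 < k" using s0 assms(1,2) by (simp add: k_def)
  have h1x: "h1 w v *v x = k *\<^sub>R (x - (W \<bullet> x) *\<^sub>R W + (U \<bullet> x) *\<^sub>R U)" for x
    unfolding h1_def Ueq W_def[symmetric] k_def[unfolded s_def t_def, symmetric]
    by (simp add: scaleR_matrix_vector_assoc[symmetric] matrix_vector_mult_add_rdistrib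
        matrix_vector_mult_diff_rdistrib outer_mv inner_commute)
  have sp1: "spnorm (h1 w v) = k * 2"
  proof (rule onorm_eqI)
    fix x
    show "norm (h1 w v *v x) \<le> k * 2 * norm x"
      using boundC[OF nW nU WU, of x] k0 by (simp add: h1x)
  next
    show "U \<noteq> 0" using nU by auto
    have "h1 w v *v U = k *\<^sub>R (U + U)" using WU nU
      by (simp add: h1x inner_commute norm_eq_1)
    also have "\<dots> = (2 * k) *\<^sub>R U" by (simp add: scaleR_2[symmetric])
    finally have "h1 w v *v U = (2 * k) *\<^sub>R U" .
    then show "norm (h1 w v *v U) = k * 2 * norm U" using k0 nU by simp
  qed
  define q where "q = pi - t"
  have q0: "0 < q" using assms(4) by (simp add: q_def t_def)
  have h2x: "h2 w v *v x = (1 / (2*pi)) *\<^sub>R (q *\<^sub>R x +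
      (((c *\<^sub>R W + s *\<^sub>R U) \<bullet> x) *\<^sub>R (s *\<^sub>R W - c *\<^sub>R U) + (W \<bullet> x) *\<^sub>R U))" for x
    unfolding h2_def Ueq Peq W_def[symmetric] V_def[symmetric] t_def[symmetric] q_def[symmetric]
    by (simp add: scaleR_matrix_vector_assoc[symmetric] matrix_vector_mult_add_rdistrib
        outer_mv Pd Vd[symmetric])
  define x0 where "x0 = W + V"
  have sp2: "spnorm (h2 w v) = (q + s) / (2 * pi)"
  proof (rule onorm_eqI)
    fix x
    have "norm (q *\<^sub>R x +
      (((c *\<^sub>R W + s *\<^sub>R U) \<bullet> x) *\<^sub>R (s *\<^sub>R W - c *\<^sub>R U) + (W \<bullet> x) *\<^sub>R U))
       \<le> q * norm x + s * norm x"
      using norm_triangle_ineq[of "q *\<^sub>R x"] boundB[OF nW nU WU cs less_imp_le[OF s0], of x]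
        q0 by (smt (verit) norm_scaleR)
    then show "norm (h2 w v *v x) \<le> (q + s) / (2 * pi) * norm x"
      unfolding h2x norm_scaleR by (simp add: divide_right_mono algebra_simps del: scaleR_add_right)
  next
    have x0d: "x0 = (1 + c) *\<^sub>R W + s *\<^sub>R U" by (simp add: x0_def Vd algebra_simps)
    show "x0 \<noteq> 0"
    proof
      assume "x0 = 0"
      then have "W \<bullet> x0 = 0" by simp
      then show False using WU WW csm by (simp add: x0d inner_add_right)
    qed
    have i1: "W \<bullet> x0 = 1 + c" using WU WW by (simp add: x0d inner_add_right)
    have i2: "(c *\<^sub>R W + s *\<^sub>R U) \<bullet> x0 = 1 + c" using Vd c i1 VV
      by (simp add: x0_def inner_add_right inner_commute)
    have Mx0: "((c *\<^sub>R W + s *\<^sub>R U) \<bullet> x0) *\<^sub>R (s *\<^sub>R W - c *\<^sub>R U) + (W \<bullet> x0) *\<^sub>R U = s *\<^sub>R x0"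
    proof -
      have "((c *\<^sub>R W + s *\<^sub>R U) \<bullet> x0) *\<^sub>R (s *\<^sub>R W - c *\<^sub>R U) + (W \<bullet> x0) *\<^sub>R U
          = (s * (1 + c)) *\<^sub>R W + ((1 + c) * (1 - c)) *\<^sub>R U"
        unfolding i1 i2 by (simp add: algebra_simps)
      also have "(1 + c) * (1 - c) = s * s" using cs by (simp add: power2_eq_square algebra_simps)
      finally show ?thesis by (simp add: x0d algebra_simps)
    qed
    then have "h2 w v *v x0 = ((q + s) / (2 * pi)) *\<^sub>R x0"
      unfolding h2x Mx0 by (simp add: scaleR_add_left[symmetric] add_divide_distrib)
    then show "norm (h2 w v *v x0) = (q + s) / (2 * pi) * norm x0" using q0 s0 by simp
  qed
  show ?thesis using sp1 sp2 unfolding k_def q_def s_def t_def by simp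
qed

end
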